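(* Let $n>2k$ and $\ell$ be integers with $k\ge\ell\ge 2$, $X=\{1,\dots,n\}$. Let $\mathcal F\subset\binom{X}{k}$ be a saturated intersecting family, let $\mathcal B=\mathcal B(\mathcal F)$, and let $t=\min\{|B|\colon B\in\mathcal B\}$. Assume $t\ge 2$ and $\tau(\mathcal B^{(\le\ell)})\ge 2$. Then $$|\mathcal B^{(\ell)}|\le t\cdot\ell\cdot k^{\ell-2}.$$
   Context: $\binom{X}{k}$ is the family of $k$-subsets of $X$. A family is intersecting if any two of its members intersect. For $\mathcal G\subset 2^X$, $\mathcal T(\mathcal G):=\{T\subset X\colon |T|\le k,\ T\cap G\neq\emptyset \text{ for all } G\in\mathcal G\}$. An intersecting family $\mathcal F\subset\binom{X}{k}$ is saturated if for every $G\in\binom{X}{k}\setminus\mathcal F$ the family $\mathcal F\cup\{G\}$ is not intersecting. $\mathcal B(\mathcal F)$ denotes the family of inclusion-minimal members of $\mathcal T(\mathcal F)$. For a family $\mathcal H$, $\mathcal H^{(i)}:=\{H\in\mathcal H\colon |H|=i\}$ and $\mathcal H^{(\le \ell)}:=\bigcup_{i=1}^{\ell}\mathcal H^{(i)}$. The covering number $\tau(\mathcal H)$ is the minimum size of a set $T$ with $T\cap H\neq\emptyset$ for all $H\in\mathcal H$ (so $\tau(\mathcal H)\ge 2$ means $\mathcal H$ is nonempty and no single element lies in all members of $\mathcal H$). *)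

theory Defs
  imports Main
begin

definition k_subsets :: "'a set \<Rightarrow> nat \<Rightarrow> 'a set set" where
  "k_subsets X k = {A. A \<subseteq> X \<and> card A = k}"

definition intersecting :: "'a set set \<Rightarrow> bool" where
  "intersecting F \<longleftrightarrow> (\<forall>A\<in>F. \<forall>B\<in>F. A \<inter> B \<noteq> {})"

definition saturated :: "'a set \<Rightarrow> nat \<Rightarrow> 'a set set \<Rightarrow> bool" where
  "saturated X k F \<longleftrightarrow> F \<subseteq> k_subsets X k \<and> intersecting F \<and>
     (\<forall>G \<in> k_subsets X k - F. \<not> intersecting (F \<union> {G}))"

definition transversals :: "'a set \<Rightarrow> nat \<Rightarrow> 'a set set \<Rightarrow> 'a set set" where
  "transversals X k G = {T. T \<subseteq> X \<and> card T \<le> k \<and> (\<forall>A\<in>G. T \<inter> A \<noteq> {})}"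

definition minimal_transversals :: "'a set \<Rightarrow> nat \<Rightarrow> 'a set set \<Rightarrow> 'a set set" where
  "minimal_transversals X k F =
     {T \<in> transversals X k F. \<forall>S \<in> transversals X k F. S \<subseteq> T \<longrightarrow> S = T}"

definition layer :: "'a set set \<Rightarrow> nat \<Rightarrow> 'a set set" where
  "layer H i = {A \<in> H. card A = i}"

definition layer_le :: "'a set set \<Rightarrow> nat \<Rightarrow> 'a set set" where
  "layer_le H l = (\<Union>i\<in>{1..l}. layer H i)"

definition covering_number :: "'a set set \<Rightarrow> nat" where
  "covering_number H = (LEAST m. \<exists>T. finite T \<and> card T = m \<and> (\<forall>A\<in>H. T \<inter> A \<noteq> {}))"

end

theory Submission
  imports Defs
begin

lemma superset_card:
  assumes "finite Y" "A \<subseteq> Y" "card A \<le> m" "m \<le> card Y"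
  shows "\<exists>G. A \<subseteq> G \<and> G \<subseteq> Y \<and> card G = m"
proof -
  have fA: "finite A" using assms finite_subset by blast
  have "card (Y - A) = card Y - card A" using assms fA card_Diff_subset by blast
  hence "m - card A \<le> card (Y - A)" using assms by linarith
  then obtain C where C: "C \<subseteq> Y - A" "card C = m - card A"
    by (meson obtain_subset_with_card_n)
  have fC: "finite C" using C assms finite_subset by (metis finite_Diff)
  have "A \<inter> C = {}" using C by blast
  hence "card (A \<union> C) = card A + card C" using fA fC by (simp add: card_Un_disjoint)
  hence "card (A \<union> C) = m" using C assms by simp
  thus ?thesis using C assms by (intro exI[of _ "A \<union> C"]) auto
qed

lemma trans_meet:
  assumes sat: "saturated X k F" and fX: "finite X" and cX: "card X \<ge> 2*k" and k1: "k \<ge> 1"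
    and T1: "T1 \<in> transversals X k F" and T2: "T2 \<in> transversals X k F"
  shows "T1 \<inter> T2 \<noteq> {}"
proof
  assume disj: "T1 \<inter> T2 = {}"
  have T1s: "T1 \<subseteq> X" "card T1 \<le> k" "\<forall>A\<in>F. T1 \<inter> A \<noteq> {}" using T1 by (auto simp: transversals_def)
  have T2s: "T2 \<subseteq> X" "card T2 \<le> k" "\<forall>A\<in>F. T2 \<inter> A \<noteq> {}" using T2 by (auto simp: transversals_def)
  have "card (X - T2) = card X - card T2" using T2s fX card_Diff_subset finite_subset by blast
  hence ck: "k \<le> card (X - T2)" using cX T2s by linarith
  obtain G where G: "T1 \<subseteq> G" "G \<subseteq> X - T2" "card G = k"
    using superset_card[of "X - T2" T1 k] fX T1s disj ck by auto
  have Gk: "G \<in> k_subsets X k" using G by (auto simp: k_subsets_def)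
  have Gm: "\<forall>A\<in>F. G \<inter> A \<noteq> {}" using G T1s by blast
  have Gne: "G \<noteq> {}" using G k1 by auto
  have FI: "intersecting F" using sat by (simp add: saturated_def)
  have "G \<in> F"
  proof (rule ccontr)
    assume "G \<notin> F"
    hence "\<not> intersecting (F \<union> {G})" using sat Gk by (auto simp: saturated_def)
    moreover have "intersecting (F \<union> {G})"
      using FI Gm Gne unfolding intersecting_def by (auto simp: Int_commute)
    ultimately show False by blast
  qed
  hence "T2 \<inter> G \<noteq> {}" using T2s by blast
  thus False using G by blast
qed

lemma count_lemma:
  fixes M L :: "'a set set"
  assumes M: "M = minimal_transversals X k F" and L: "L = layer M l"
    and Fk: "F \<subseteq> k_subsets X k" and lk: "l \<le> k" and fX: "finite X"
  shows "\<And>S. card S \<le> l \<Longrightarrow> l - card S = d \<Longrightarrow> card {B\<in>L. S \<subseteq> B} \<le> k ^ d"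
proof (induction d)
  case (0 S)
  have "{B\<in>L. S \<subseteq> B} \<subseteq> {S}"
  proof
    fix B assume B: "B \<in> {B\<in>L. S \<subseteq> B}"
    hence "B \<in> transversals X k F" "card B = l" "S \<subseteq> B" using M L
      by (auto simp: layer_def minimal_transversals_def)
    hence fB: "finite B" using fX by (auto simp: transversals_def intro: finite_subset)
    have "card S = l" using 0 by simp
    hence "S = B" using card_subset_eq[OF fB \<open>S \<subseteq> B\<close>] \<open>card B = l\<close> by simp
    thus "B \<in> {S}" by simp
  qed
  hence "card {B\<in>L. S \<subseteq> B} \<le> card {S}" by (intro card_mono) auto
  thus ?case by simp
next
  case (Suc d S)
  show ?case
  proof (cases "{B\<in>L. S \<subseteq> B} = {}")
    case True thus ?thesis by (simp only: card.empty)
  next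
    case False
    then obtain B0 where B0: "B0 \<in> L" "S \<subseteq> B0" by blast
    hence B0t: "B0 \<in> transversals X k F" "card B0 = l"
      and B0m: "\<forall>S'\<in>transversals X k F. S' \<subseteq> B0 \<longrightarrow> S' = B0" using M L
      by (auto simp: layer_def minimal_transversals_def)
    hence fB0: "finite B0" using fX by (auto simp: transversals_def intro: finite_subset)
    hence fS: "finite S" using B0 finite_subset by blast
    have SX: "S \<subseteq> X" using B0 B0t by (auto simp: transversals_def)
    have cS: "card S < l" using Suc.prems by simp
    have "S \<noteq> B0" using cS B0t by auto
    hence "S \<notin> transversals X k F" using B0m B0 by blast
    then obtain A where A: "A \<in> F" "S \<inter> A = {}"
      using SX cS lk by (auto simp: transversals_def)
    have AX: "A \<subseteq> X" "card A = k" using A Fk by (auto simp: k_subsets_def)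
    have fA: "finite A" using AX fX finite_subset by blast
    have sub: "{B\<in>L. S \<subseteq> B} \<subseteq> (\<Union>y\<in>A. {B\<in>L. insert y S \<subseteq> B})"
    proof
      fix B assume B: "B \<in> {B\<in>L. S \<subseteq> B}"
      hence "B \<in> transversals X k F" using M L by (auto simp: layer_def minimal_transversals_def)
      hence "B \<inter> A \<noteq> {}" using A by (auto simp: transversals_def)
      then obtain y where "y \<in> B" "y \<in> A" by blast
      thus "B \<in> (\<Union>y\<in>A. {B\<in>L. insert y S \<subseteq> B})" using B by blast
    qed
    have each: "card {B\<in>L. insert y S \<subseteq> B} \<le> k ^ d" if y: "y \<in> A" for y
    proof -
      have "y \<notin> S" using y A by blast
      hence "card (insert y S) = Suc (card S)" using fS by simp
      thus ?thesis using Suc.IH[of "insert y S"] Suc.prems cS by simp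
    qed
    have "card {B\<in>L. S \<subseteq> B} \<le> card (\<Union>y\<in>A. {B\<in>L. insert y S \<subseteq> B})"
    proof (rule card_mono[OF _ sub])
      have "L \<subseteq> Pow X" using M L by (auto simp: layer_def minimal_transversals_def transversals_def)
      hence "finite L" using fX finite_subset by blast
      thus "finite (\<Union>y\<in>A. {B\<in>L. insert y S \<subseteq> B})" using fA by auto
    qed
    also have "\<dots> \<le> (\<Sum>y\<in>A. card {B\<in>L. insert y S \<subseteq> B})" by (rule card_UN_le[OF fA])
    also have "\<dots> \<le> (\<Sum>y\<in>A. k ^ d)" using each by (rule sum_mono)
    also have "\<dots> = k ^ Suc d" using AX by simp
    finally show ?thesis .
  qed
qed

theorem lemma2p3:
  fixes n k l t :: nat and F :: "nat set set"
  assumes "n > 2 * k" and "k \<ge> l" and "l \<ge> 2"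
    and "saturated {1..n} k F"
    and "t = Min (card ` minimal_transversals {1..n} k F)"
    and "t \<ge> 2"
    and "covering_number (layer_le (minimal_transversals {1..n} k F) l) \<ge> 2"
  shows "card (layer (minimal_transversals {1..n} k F) l) \<le> t * l * k ^ (l - 2)"
proof -
  define X :: "nat set" where "X = {1..n}"
  define M where "M = minimal_transversals X k F"
  define L where "L = layer M l"
  define H where "H = layer_le M l"
  have fX: "finite X" and cX: "card X \<ge> 2*k" using assms(1) by (auto simp: X_def)
  have k1: "k \<ge> 1" using assms by linarith
  have Fk: "F \<subseteq> k_subsets X k" using assms(4) by (simp add: saturated_def X_def)
  have Mt: "M \<subseteq> transversals X k F" by (auto simp: M_def minimal_transversals_def)
  have meet: "B \<inter> B' \<noteq> {}" if "B \<in> M" "B' \<in> M" for B B'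
    proof -
    have s: "saturated X k F" using assms(4) by (simp add: X_def)
    show ?thesis using trans_meet[OF s fX cX k1, of B B'] that Mt by (meson subsetD)
  qed
  have MP: "M \<subseteq> Pow X" using Mt by (auto simp: transversals_def)
  hence fM: "finite M" using finite_subset[OF MP] fX by simp
  have cov: "\<exists>A\<in>H. x \<notin> A" for x
  proof (rule ccontr)
    assume "\<not> (\<exists>A\<in>H. x \<notin> A)"
    hence "\<exists>T. finite T \<and> card T = 1 \<and> (\<forall>A\<in>H. T \<inter> A \<noteq> {})"
      by (intro exI[of _ "{x}"]) auto
    hence "covering_number H \<le> 1" unfolding covering_number_def by (rule Least_le)
    thus False using assms(7) by (simp add: H_def M_def X_def)
  qed
  have HM: "H \<subseteq> M" by (auto simp: H_def layer_le_def layer_def)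
  have Hl: "card A \<le> l" if "A \<in> H" for A using that by (auto simp: H_def layer_le_def layer_def)
  obtain C where C: "\<And>x. C x \<in> H \<and> x \<notin> C x" using cov by metis
  have "M \<noteq> {}" using C HM by blast
  hence "t \<in> card ` M" using fM assms(5) Min_in by (simp add: M_def X_def)
  then obtain B0 where B0: "B0 \<in> M" "card B0 = t" by auto
  have fB: "finite B" if "B \<in> M" for B using that MP fX finite_subset by blast
  have cnt: "card {B\<in>L. {x,y} \<subseteq> B} \<le> k ^ (l - 2)" if "x \<noteq> y" for x y
    proof -
    have c2: "card {x,y} = 2" using that by simp
    show ?thesis using count_lemma[OF M_def L_def Fk assms(2) fX, of "{x,y}" "l - 2"] c2 assms(3) by simp
  qed
  have sub: "L \<subseteq> (\<Union>x\<in>B0. \<Union>y\<in>C x. {B\<in>L. {x,y} \<subseteq> B})"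
  proof
    fix B assume B: "B \<in> L"
    hence BM: "B \<in> M" by (simp add: L_def layer_def)
    obtain x where x: "x \<in> B" "x \<in> B0" using meet[OF BM B0(1)] by blast
    have "C x \<in> M" using C HM by blast
    then obtain y where y: "y \<in> B" "y \<in> C x" using meet[OF BM] by blast
    show "B \<in> (\<Union>x\<in>B0. \<Union>y\<in>C x. {B\<in>L. {x,y} \<subseteq> B})" using x y B by blast
  qed
  have fL: "finite L" using fM by (simp add: L_def layer_def)
  have "card L \<le> card (\<Union>x\<in>B0. \<Union>y\<in>C x. {B\<in>L. {x,y} \<subseteq> B})"
    by (rule card_mono[OF _ sub]) (rule finite_subset[OF _ fL], blast)
  also have "\<dots> \<le> (\<Sum>x\<in>B0. card (\<Union>y\<in>C x. {B\<in>L. {x,y} \<subseteq> B}))"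
    by (rule card_UN_le[OF fB[OF B0(1)]])
  also have "\<dots> \<le> (\<Sum>x\<in>B0. l * k ^ (l - 2))"
  proof (rule sum_mono)
    fix x assume "x \<in> B0"
    have fC: "finite (C x)" using C HM fB by blast
    have "card (\<Union>y\<in>C x. {B\<in>L. {x,y} \<subseteq> B}) \<le> (\<Sum>y\<in>C x. card {B\<in>L. {x,y} \<subseteq> B})"
      by (rule card_UN_le[OF fC])
    also have "\<dots> \<le> (\<Sum>y\<in>C x. k ^ (l - 2))"
      proof (rule sum_mono)
        fix y assume "y \<in> C x"
        hence "x \<noteq> y" using C by metis
        thus "card {B\<in>L. {x,y} \<subseteq> B} \<le> k ^ (l - 2)" by (rule cnt)
      qed
    also have "\<dots> = card (C x) * k ^ (l - 2)" by simp
    also have "\<dots> \<le> l * k ^ (l - 2)" using Hl C by simp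
    finally show "card (\<Union>y\<in>C x. {B\<in>L. {x,y} \<subseteq> B}) \<le> l * k ^ (l - 2)" .
  qed
  also have "\<dots> = t * l * k ^ (l - 2)" using B0 by simp
  finally show ?thesis by (simp add: L_def M_def X_def)
qed

end
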